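(* There exist an S4 theorem $A$ and an LP formula $B$ such that $A$ has no prehistoric-cycle-free G3s proof, $B^\circ = A$, and $\mathrm{LP}(\mathrm{CS}^\odot)\vdash B$. Specifically, one may take $A := \Box(P\land\lnot\Box P\to P)\to\lnot\Box(P\land\lnot\Box P)$ and $B := y{:}(P\land\lnot (y\cdot x){:}P\to P)\to\lnot x{:}(P\land\lnot (y\cdot x){:}P)$, for an atom $P$ and distinct variables $x,y$.
   Context: LP terms: $t ::= c \mid x \mid t_0\cdot t_1 \mid t_0+t_1 \mid\ !t$; LP formulas: $A ::= \bot \mid P \mid A_0\to A_1 \mid t{:}A$; $\lnot A := A\to\bot$, $\land$ a classical abbreviation. LP: axioms A0 (classical propositional schemes), A1 $t{:}F\to F$, A2 $s{:}(F\to G)\to(t{:}F\to(s\cdot t){:}G)$, A3 $t{:}F\to\ !t{:}(t{:}F)$, A4 $s{:}F\to(s+t){:}F$, $t{:}F\to(s+t){:}F$; rules modus ponens and axiom necessitation ($A\vdash c{:}A$ for $A$ an axiom, $c$ a constant). A constant specification CS is a set of formulas $c{:}A$ with $c$ a constant and $A$ an axiom; LP(CS) restricts axiom necessitation to members of CS. CS is self-referential if there are $c_0{:}A_0,\dots,c_{n-1}{:}A_{n-1}\in\mathrm{CS}$ ($n\ge1$) with $c_{(k+1)\bmod n}$ occurring in $A_k$ for all $k$. $\mathrm{LP}(\mathrm{CS}^\odot)\vdash B$ means $\mathrm{LP}(\mathrm{CS})\vdash B$ for some non-self-referential CS. Forgetful projection: $(t{:}A)^\circ=\Box A^\circ$,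 commuting with $\to$, atoms, $\bot$. G3s is the cut-free sequent calculus for S4 with rules (Ax) $P,\Gamma\supset\Delta,P$; $(\bot\supset)$; $(\to\supset)$; $(\supset\to)$; $(\Box\supset)$ from $A,\Box A,\Gamma\supset\Delta$ infer $\Box A,\Gamma\supset\Delta$; $(\supset\Box)$ from $\Box\Gamma\supset A$ infer $\Gamma',\Box\Gamma\supset\Delta',\Box A$ (plus standard rules for $\lnot,\land$ if these are primitive). Families are equivalence classes of $\Box$-occurrences under correspondence (side-formula occurrences correspond from premise to conclusion; active formulas correspond to their topmost occurrence as subformula of the principal formula, symbolwise; closed reflexively, symmetrically, transitively). $i\prec j$ if some $(\supset\Box)$ rule whose principal $\Box A$ has outermost $\Box$ in family $j$ has a premise containing a $\Box$ of family $i$; a G3s proof is prehistoric-cycle-free if there is no $i_0\prec\cdots\prec i_{n-1}\prec i_0$ ($n\ge1$). A G3s proof of $A$ means a proof of the sequent $\supset A$. *)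

theory Defs
  imports Main
begin

datatype mform = MBot | MAt nat | MImp mform mform | MBox mform

definition mnot :: "mform \<Rightarrow> mform" where "mnot A = MImp A MBot"
definition mand :: "mform \<Rightarrow> mform \<Rightarrow> mform" where
  "mand A B = mnot (MImp A (mnot B))"

inductive s4_thm :: "mform \<Rightarrow> bool" where
  s4_k: "s4_thm (MImp A (MImp B A))"
| s4_s: "s4_thm (MImp (MImp A (MImp B C)) (MImp (MImp A B) (MImp A C)))"
| s4_dn: "s4_thm (MImp (mnot (mnot A)) A)"
| s4_K: "s4_thm (MImp (MBox (MImp A B)) (MImp (MBox A) (MBox B)))"
| s4_T: "s4_thm (MImp (MBox A) A)"
| s4_4: "s4_thm (MImp (MBox A) (MBox (MBox A)))"
| s4_mp: "s4_thm (MImp A B) \<Longrightarrow> s4_thm A \<Longrightarrow> s4_thm B"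
| s4_nec: "s4_thm A \<Longrightarrow> s4_thm (MBox A)"

datatype lpterm = Cn nat | Vr nat | App lpterm lpterm | Plus lpterm lpterm | Bang lpterm

datatype lpf = LBot | LAt nat | LImp lpf lpf | LJ lpterm lpf

definition lnot :: "lpf \<Rightarrow> lpf" where "lnot A = LImp A LBot"
definition land :: "lpf \<Rightarrow> lpf \<Rightarrow> lpf" where
  "land A B = lnot (LImp A (lnot B))"

fun consts_t :: "lpterm \<Rightarrow> nat set" where
  "consts_t (Cn c) = {c}"
| "consts_t (Vr x) = {}"
| "consts_t (App s t) = consts_t s \<union> consts_t t"
| "consts_t (Plus s t) = consts_t s \<union> consts_t t"
| "consts_t (Bang t) = consts_t t"

fun consts_f :: "lpf \<Rightarrow> nat set" where
  "consts_f LBot = {}"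
| "consts_f (LAt p) = {}"
| "consts_f (LImp A B) = consts_f A \<union> consts_f B"
| "consts_f (LJ t A) = consts_t t \<union> consts_f A"

inductive lp_axiom :: "lpf \<Rightarrow> bool" where
  ax_k: "lp_axiom (LImp A (LImp B A))"
| ax_s: "lp_axiom (LImp (LImp A (LImp B C)) (LImp (LImp A B) (LImp A C)))"
| ax_dn: "lp_axiom (LImp (lnot (lnot A)) A)"
| ax_A1: "lp_axiom (LImp (LJ t F) F)"
| ax_A2: "lp_axiom (LImp (LJ s (LImp F G)) (LImp (LJ t F) (LJ (App s t) G)))"
| ax_A3: "lp_axiom (LImp (LJ t F) (LJ (Bang t) (LJ t F)))"
| ax_A4a: "lp_axiom (LImp (LJ s F) (LJ (Plus s t) F))"
| ax_A4b: "lp_axiom (LImp (LJ t F) (LJ (Plus s t) F))"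

text \<open>A constant specification is a set of pairs (c, A), standing for c:A, with A an axiom.\<close>
definition const_spec :: "(nat \<times> lpf) set \<Rightarrow> bool" where
  "const_spec CS \<longleftrightarrow> (\<forall>(c, A) \<in> CS. lp_axiom A)"

definition self_referential :: "(nat \<times> lpf) set \<Rightarrow> bool" where
  "self_referential CS \<longleftrightarrow>
     (\<exists>n::nat. \<exists>f :: nat \<Rightarrow> nat \<times> lpf. n \<ge> 1 \<and> (\<forall>k<n. f k \<in> CS) \<and>
        (\<forall>k<n. fst (f ((k + 1) mod n)) \<in> consts_f (snd (f k))))"

inductive lp_deriv :: "(nat \<times> lpf) set \<Rightarrow> lpf \<Rightarrow> bool" for CS where
  lp_ax: "lp_axiom A \<Longrightarrow> lp_deriv CS A"
| lp_an: "(c, A) \<in> CS \<Longrightarrow> lp_deriv CS (LJ (Cn c) A)"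
| lp_mp: "lp_deriv CS (LImp A B) \<Longrightarrow> lp_deriv CS A \<Longrightarrow> lp_deriv CS B"

text \<open>LP(CS-odot) derivability: derivable in LP(CS) for some non-self-referential CS.\<close>
definition lp_nsr_deriv :: "lpf \<Rightarrow> bool" where
  "lp_nsr_deriv B \<longleftrightarrow> (\<exists>CS. const_spec CS \<and> \<not> self_referential CS \<and> lp_deriv CS B)"

fun forget :: "lpf \<Rightarrow> mform" where
  "forget LBot = MBot"
| "forget (LAt p) = MAt p"
| "forget (LImp A B) = MImp (forget A) (forget B)"
| "forget (LJ t A) = MBox (forget A)"

type_synonym sequent = "mform list \<times> mform list"

text \<open>Rules; the nat arguments are positions of principal formulas in the lists.
  RBoxR ks j: principal box at succedent j; the boxed antecedent formulas at
  (distinct) positions ks are kept (in this order) in the premise.\<close>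
datatype rule = RAx nat nat | RBotL nat | RImpL nat | RImpR nat | RBoxL nat
  | RBoxR "nat list" nat

datatype ptree = Node sequent rule "ptree list"

fun root :: "ptree \<Rightarrow> sequent" where "root (Node s r ts) = s"

definition del :: "nat \<Rightarrow> 'a list \<Rightarrow> 'a list" where
  "del i xs = take i xs @ drop (Suc i) xs"

fun is_box :: "mform \<Rightarrow> bool" where
  "is_box (MBox A) = True" | "is_box _ = False"

fun rule_prems :: "sequent \<Rightarrow> rule \<Rightarrow> sequent list option" where
  "rule_prems (G, D) (RAx i j) =
     (if i < length G \<and> j < length D \<and> (\<exists>p. G ! i = MAt p \<and> D ! j = MAt p)
      then Some [] else None)"
| "rule_prems (G, D) (RBotL i) =
     (if i < length G \<and> G ! i = MBot then Some [] else None)"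
| "rule_prems (G, D) (RImpL i) =
     (if i < length G then (case G ! i of
         MImp A B \<Rightarrow> Some [(del i G, A # D), (B # del i G, D)]
       | _ \<Rightarrow> None) else None)"
| "rule_prems (G, D) (RImpR j) =
     (if j < length D then (case D ! j of
         MImp A B \<Rightarrow> Some [(A # G, B # del j D)]
       | _ \<Rightarrow> None) else None)"
| "rule_prems (G, D) (RBoxL i) =
     (if i < length G then (case G ! i of
         MBox A \<Rightarrow> Some [(A # G, D)]
       | _ \<Rightarrow> None) else None)"
| "rule_prems (G, D) (RBoxR ks j) =
     (if j < length D \<and> distinct ks \<and> (\<forall>k\<in>set ks. k < length G \<and> is_box (G ! k))
      then (case D ! j of
         MBox A \<Rightarrow> Some [(map (\<lambda>k. G ! k) ks, [A])]
       | _ \<Rightarrow> None) else None)"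

inductive g3s_valid :: "ptree \<Rightarrow> bool" where
  "rule_prems s r = Some (map root ts) \<Longrightarrow> (\<forall>t \<in> set ts. g3s_valid t)
     \<Longrightarrow> g3s_valid (Node s r ts)"

definition g3s_proof_of :: "ptree \<Rightarrow> mform \<Rightarrow> bool" where
  "g3s_proof_of T A \<longleftrightarrow> g3s_valid T \<and> root T = ([], [A])"

fun subtree :: "ptree \<Rightarrow> nat list \<Rightarrow> ptree option" where
  "subtree t [] = Some t"
| "subtree (Node s r ts) (k # p) = (if k < length ts then subtree (ts ! k) p else None)"

fun subf :: "mform \<Rightarrow> nat list \<Rightarrow> mform option" where
  "subf A [] = Some A"
| "subf (MImp A B) (k # p) = (if k = 0 then subf A p else if k = 1 then subf B p else None)"
| "subf (MBox A) (k # p) = (if k = 0 then subf A p else None)"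
| "subf _ (k # p) = None"

text \<open>A formula occurrence in a sequent: side (True = antecedent, False = succedent)
  and index.  A box occurrence in a proof: (node path, side, index, position).\<close>
type_synonym occ = "nat list \<times> bool \<times> nat \<times> nat list"

definition fml_at :: "sequent \<Rightarrow> bool \<Rightarrow> nat \<Rightarrow> mform option" where
  "fml_at s b n = (let xs = (if b then fst s else snd s) in
                     if n < length xs then Some (xs ! n) else None)"

definition box_occs :: "ptree \<Rightarrow> occ set" where
  "box_occs T = {(\<pi>, b, n, p). \<exists>s r ts A C. subtree T \<pi> = Some (Node s r ts)
        \<and> fml_at s b n = Some A \<and> subf A p = Some (MBox C)}"

definition skip :: "nat \<Rightarrow> nat \<Rightarrow> nat" where
  "skip i k = (if k < i then k else Suc k)"

text \<open>Correspondence map: formula at side b, index n of premise number k of a rule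
  application corresponds to the subformula at position pre of the conclusion
  formula at side b', index n' (pre = [] for side formulas; for active formulas,
  pre locates them inside the principal formula).\<close>
fun cmap :: "rule \<Rightarrow> nat \<Rightarrow> bool \<Rightarrow> nat \<Rightarrow> (bool \<times> nat \<times> nat list) option" where
  "cmap (RImpL i) 0 True n = Some (True, skip i n, [])"
| "cmap (RImpL i) 0 False n = (if n = 0 then Some (True, i, [0]) else Some (False, n - 1, []))"
| "cmap (RImpL i) (Suc 0) True n = (if n = 0 then Some (True, i, [1]) else Some (True, skip i (n - 1), []))"
| "cmap (RImpL i) (Suc 0) False n = Some (False, n, [])"
| "cmap (RImpR j) 0 True n = (if n = 0 then Some (False, j, [0]) else Some (True, n - 1, []))"
| "cmap (RImpR j) 0 False n = (if n = 0 then Some (False, j, [1]) else Some (False, skip j (n - 1), []))"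
| "cmap (RBoxL i) 0 True n = (if n = 0 then Some (True, i, [0]) else Some (True, n - 1, []))"
| "cmap (RBoxL i) 0 False n = Some (False, n, [])"
| "cmap (RBoxR ks j) 0 True n = (if n < length ks then Some (True, ks ! n, []) else None)"
| "cmap (RBoxR ks j) 0 False n = (if n = 0 then Some (False, j, [0]) else None)"
| "cmap _ _ _ _ = None"

definition corr :: "ptree \<Rightarrow> occ rel" where
  "corr T = {((\<pi> @ [k], b, n, p), (\<pi>, b', n', pre @ p)) | \<pi> k b n p b' n' pre s r ts.
      (\<pi> @ [k], b, n, p) \<in> box_occs T \<and> subtree T \<pi> = Some (Node s r ts)
      \<and> cmap r k b n = Some (b', n', pre)}"

definition fam_rel :: "ptree \<Rightarrow> occ rel" where
  "fam_rel T = (corr T \<union> (corr T)\<inverse> \<union> Id_on (box_occs T))\<^sup>*"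

definition family :: "ptree \<Rightarrow> occ \<Rightarrow> occ set" where
  "family T oc = fam_rel T `` {oc}"

definition families :: "ptree \<Rightarrow> occ set set" where
  "families T = family T ` box_occs T"

text \<open>i \<prec> j: some (\<supset>Box) rule whose principal box (outermost box) is in family j has a
  premise containing a box occurrence of family i.\<close>
definition prehist :: "ptree \<Rightarrow> occ set rel" where
  "prehist T = {(family T oc, family T (\<pi>, False, j, [])) | oc \<pi> j ks s ts.
      subtree T \<pi> = Some (Node s (RBoxR ks j) ts) \<and> oc \<in> box_occs T
      \<and> fst oc = \<pi> @ [0]}"

definition prehistoric_cycle_free :: "ptree \<Rightarrow> bool" where
  "prehistoric_cycle_free T \<longleftrightarrow> acyclic (prehist T)"

definition P_m :: mform where "P_m = MAt 0"
definition A_ex :: mform where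
  "A_ex = MImp (MBox (MImp (mand P_m (mnot (MBox P_m))) P_m))
               (mnot (MBox (mand P_m (mnot (MBox P_m)))))"

definition P_l :: lpf where "P_l = LAt 0"
definition x_v :: lpterm where "x_v = Vr 0"
definition y_v :: lpterm where "y_v = Vr 1"
definition B_ex :: lpf where
  "B_ex = LImp (LJ y_v (LImp (land P_l (lnot (LJ (App y_v x_v) P_l))) P_l))
               (lnot (LJ x_v (land P_l (lnot (LJ (App y_v x_v) P_l)))))"

end

theory Submission
  imports Defs
begin

section \<open>S4 Hilbert derivations\<close>

lemma s4_syl: assumes "s4_thm (MImp A B)" "s4_thm (MImp B C)" shows "s4_thm (MImp A C)"
proof -
  have "s4_thm (MImp A (MImp B C))" using s4_mp[OF s4_k assms(2)] .
  hence "s4_thm (MImp (MImp A B) (MImp A C))" using s4_mp[OF s4_s] by blast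
  thus ?thesis using s4_mp assms(1) by blast
qed

lemma s4_swap: assumes "s4_thm (MImp X (MImp Y Z))" shows "s4_thm (MImp Y (MImp X Z))"
proof -
  have "s4_thm (MImp (MImp X Y) (MImp X Z))" using s4_mp[OF s4_s assms] .
  thus ?thesis using s4_syl[OF s4_k] by blast
qed

lemma s4_id: "s4_thm (MImp A A)"
proof -
  have "s4_thm (MImp (MImp A (MImp A A)) (MImp A A))" using s4_mp[OF s4_s s4_k] .
  thus ?thesis using s4_mp s4_k by blast
qed

lemma s4_dni: "s4_thm (MImp A (mnot (mnot A)))"
  unfolding mnot_def using s4_swap[OF s4_id[of "MImp A MBot"]] .

lemma s4_efq: "s4_thm (MImp MBot Z)"
proof -
  have "s4_thm (MImp MBot (mnot (mnot Z)))" unfolding mnot_def by (rule s4_k)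
  thus ?thesis using s4_syl s4_dn by blast
qed

lemma s4_lift: assumes "s4_thm (MImp B C)" shows "s4_thm (MImp (MImp A B) (MImp A C))"
  using s4_mp[OF s4_s s4_mp[OF s4_k assms]] .

lemma s4_contra: assumes "s4_thm (MImp A B)" shows "s4_thm (MImp (MImp B C) (MImp A C))"
proof -
  have "s4_thm (MImp (MImp B C) (MImp (MImp A B) (MImp A C)))"
    using s4_syl[OF s4_k s4_s] .
  thus ?thesis using s4_mp[OF s4_swap assms] by blast
qed

lemma s4_and1: "s4_thm (MImp (mnot (MImp A B)) A)"
proof -
  have "s4_thm (MImp (mnot A) (MImp A B))" unfolding mnot_def by (rule s4_lift[OF s4_efq])
  hence "s4_thm (MImp (mnot (MImp A B)) (mnot (mnot A)))" unfolding mnot_def by (rule s4_contra)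
  thus ?thesis using s4_syl s4_dn by blast
qed

lemma s4_A: "s4_thm A_ex"
proof -
  define Y where "Y = mand P_m (mnot (MBox P_m))"
  define W where "W = MImp P_m (mnot (mnot (MBox P_m)))"
  have Y: "Y = MImp W MBot" unfolding Y_def W_def mand_def mnot_def by simp
  have "s4_thm (MImp Y P_m)" unfolding Y_def mand_def by (rule s4_and1)
  hence "s4_thm (MImp (MBox Y) (MBox P_m))" using s4_mp[OF s4_K s4_nec] by blast
  moreover have "s4_thm (MImp (MBox P_m) W)" unfolding W_def using s4_syl[OF s4_dni s4_k] .
  ultimately have 1: "s4_thm (MImp (MBox Y) W)" using s4_syl by blast
  have 2: "s4_thm (MImp (MBox Y) (MImp W MBot))" using s4_T[of Y] Y by simp
  have "s4_thm (MImp (MBox Y) MBot)" using s4_mp[OF s4_mp[OF s4_s 2] 1] .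
  hence "s4_thm (mnot (MBox Y))" unfolding mnot_def .
  thus ?thesis unfolding A_ex_def Y_def using s4_mp[OF s4_k] by blast
qed

section \<open>LP derivation\<close>

lemma lp_syl: assumes "lp_deriv CS (LImp A B)" "lp_deriv CS (LImp B C)" shows "lp_deriv CS (LImp A C)"
proof -
  have "lp_deriv CS (LImp A (LImp B C))" using lp_mp[OF lp_ax[OF ax_k] assms(2)] .
  hence "lp_deriv CS (LImp (LImp A B) (LImp A C))" using lp_mp[OF lp_ax[OF ax_s]] by blast
  thus ?thesis using lp_mp assms(1) by blast
qed

lemma lp_swap: assumes "lp_deriv CS (LImp X (LImp Y Z))" shows "lp_deriv CS (LImp Y (LImp X Z))"
proof -
  have "lp_deriv CS (LImp (LImp X Y) (LImp X Z))" using lp_mp[OF lp_ax[OF ax_s] assms] .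
  thus ?thesis using lp_syl[OF lp_ax[OF ax_k]] by blast
qed

lemma lp_id: "lp_deriv CS (LImp A A)"
proof -
  have "lp_deriv CS (LImp (LImp A (LImp A A)) (LImp A A))" using lp_mp[OF lp_ax[OF ax_s] lp_ax[OF ax_k]] .
  thus ?thesis using lp_mp lp_ax[OF ax_k] by blast
qed

lemma lp_dni: "lp_deriv CS (LImp A (lnot (lnot A)))"
  unfolding lnot_def using lp_swap[OF lp_id[of CS "LImp A LBot"]] .

lemma lp_B: "lp_deriv {} B_ex"
proof -
  define R where "R = LJ (App y_v x_v) P_l"
  define W where "W = LImp P_l (lnot (lnot R))"
  define Y where "Y = land P_l (lnot R)"
  define U where "U = LJ y_v (LImp Y P_l)"
  define V where "V = LJ x_v Y"
  have YW: "Y = LImp W LBot" unfolding Y_def W_def land_def lnot_def by simp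
  have t1: "lp_deriv {} (LImp R W)" unfolding W_def using lp_syl[OF lp_dni lp_ax[OF ax_k]] .
  have t1': "lp_deriv {} (LImp (LImp V R) (LImp V W))"
    using lp_mp[OF lp_ax[OF ax_s] lp_mp[OF lp_ax[OF ax_k] t1]] .
  have t2: "lp_deriv {} (LImp V (LImp W LBot))" using lp_ax[OF ax_A1[of x_v Y]] YW V_def by simp
  have t3: "lp_deriv {} (LImp (LImp V W) (LImp V LBot))" using lp_mp[OF lp_ax[OF ax_s] t2] .
  have a2: "lp_deriv {} (LImp U (LImp V R))"
    unfolding U_def V_def R_def by (rule lp_ax[OF ax_A2])
  have "lp_deriv {} (LImp U (LImp V LBot))" using lp_syl[OF a2 lp_syl[OF t1' t3]] .
  thus ?thesis unfolding B_ex_def U_def V_def Y_def R_def lnot_def .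
qed

lemma lp_nsr: "lp_nsr_deriv B_ex"
  unfolding lp_nsr_deriv_def const_spec_def self_referential_def
  using lp_B by (intro exI[of _ "{}"]) (auto, presburger)

lemma forget_B: "forget B_ex = A_ex"
  by (simp add: B_ex_def A_ex_def land_def lnot_def mand_def mnot_def P_l_def P_m_def)

section \<open>Polarity and correspondence tracing\<close>

fun par :: "mform \<Rightarrow> nat list \<Rightarrow> bool" where
  "par A [] = False"
| "par (MImp A B) (k # p) = (if k = 0 then \<not> par A p else par B p)"
| "par (MBox A) (k # p) = par A p"
| "par _ (k # p) = False"

lemma subf_app:
  "subf G pre = Some F \<Longrightarrow> subf G (pre @ p) = subf F p \<and> par G (pre @ p) = (par G pre \<noteq> par F p)"
  by (induction G pre rule: subf.induct) (auto split: if_splits)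

lemma skip_lt: "i < length xs \<Longrightarrow> n < length xs - 1 \<Longrightarrow> skip i n < length xs"
  by (auto simp: skip_def)

lemma del_len: "i < length xs \<Longrightarrow> length (del i xs) = length xs - 1"
  by (auto simp: del_def)

lemma del_nth: "i < length xs \<Longrightarrow> n < length xs - 1 \<Longrightarrow> del i xs ! n = xs ! skip i n"
  by (auto simp: del_def skip_def nth_append min_def)

lemma set_del: "set (del i xs) \<subseteq> set xs"
  unfolding del_def using set_drop_subset set_take_subset by fastforce

lemma cmap_ok:
  assumes "rule_prems s0 r = Some ps" "k < length ps" "fml_at (ps ! k) b n = Some F"
  shows "\<exists>b' n' pre G. cmap r k b n = Some (b', n', pre) \<and> fml_at s0 b' n' = Some G
           \<and> subf G pre = Some F \<and> (b' \<noteq> par G pre) = b"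
proof -
  obtain G0 D0 where s0: "s0 = (G0, D0)" by (cases s0)
  show ?thesis
  proof (cases r)
    case (RAx i j) thus ?thesis using assms s0 by (auto split: if_splits)
  next
    case (RBotL i) thus ?thesis using assms s0 by (auto split: if_splits)
  next
    case (RImpL i)
    then obtain A B where i: "i < length G0" "G0 ! i = MImp A B"
      and ps: "ps = [(del i G0, A # D0), (B # del i G0, D0)]"
      using assms s0 by (auto split: if_splits mform.splits)
    have k01: "k = 0 \<or> k = 1" using assms(2) ps by auto
    have F: "fml_at (ps ! k) b n = Some F" using assms(3) .
    show ?thesis
    proof (cases "k = 0")
      case True
      show ?thesis
      proof (cases b)
        case True
        have "n < length G0 - 1" "F = G0 ! skip i n"
          using F \<open>k = 0\<close> True ps i by (simp_all add: fml_at_def del_len del_nth split: if_splits)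
        thus ?thesis using True \<open>k = 0\<close> RImpL s0 i skip_lt[OF i(1)] by (auto simp: fml_at_def)
      next
        case False
        show ?thesis
        proof (cases n)
          case 0
          have "F = A" using F \<open>k = 0\<close> False ps 0 by (simp add: fml_at_def)
          thus ?thesis using False \<open>k = 0\<close> RImpL s0 i 0 by (auto simp: fml_at_def)
        next
          case (Suc m)
          have "m < length D0" "F = D0 ! m" using F \<open>k = 0\<close> False ps Suc
            by (simp_all add: fml_at_def split: if_splits)
          thus ?thesis using False \<open>k = 0\<close> RImpL s0 Suc by (auto simp: fml_at_def)
        qed
      qed
    next
      case False
      hence k1: "k = Suc 0" using k01 by simp
      show ?thesis
      proof (cases b)
        case True
        show ?thesis
        proof (cases n)
          case 0
          have "F = B" using F k1 True ps 0 by (simp add: fml_at_def)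
          thus ?thesis using True k1 RImpL s0 i 0 by (auto simp: fml_at_def)
        next
          case (Suc m)
          have "m < length G0 - 1" "F = G0 ! skip i m"
            using F k1 True ps Suc i by (simp_all add: fml_at_def del_len del_nth split: if_splits)
          thus ?thesis using True k1 RImpL s0 i Suc skip_lt[OF i(1)] by (auto simp: fml_at_def)
        qed
      next
        case False
        have "n < length D0" "F = D0 ! n" using F k1 False ps
          by (simp_all add: fml_at_def split: if_splits)
        thus ?thesis using False k1 RImpL s0 by (auto simp: fml_at_def)
      qed
    qed
  next
    case (RImpR j)
    then obtain A B where j: "j < length D0" "D0 ! j = MImp A B"
      and ps: "ps = [(A # G0, B # del j D0)]"
      using assms s0 by (auto split: if_splits mform.splits)
    have k0: "k = 0" using assms(2) ps by auto
    have F: "fml_at (ps ! k) b n = Some F" using assms(3) .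
    show ?thesis
    proof (cases b)
      case True
      show ?thesis
      proof (cases n)
        case 0
        have "F = A" using F k0 True ps 0 by (simp add: fml_at_def)
        thus ?thesis using True k0 RImpR s0 j 0 by (auto simp: fml_at_def)
      next
        case (Suc m)
        have "m < length G0" "F = G0 ! m" using F k0 True ps Suc
          by (simp_all add: fml_at_def split: if_splits)
        thus ?thesis using True k0 RImpR s0 Suc by (auto simp: fml_at_def)
      qed
    next
      case False
      show ?thesis
      proof (cases n)
        case 0
        have "F = B" using F k0 False ps 0 by (simp add: fml_at_def)
        thus ?thesis using False k0 RImpR s0 j 0 by (auto simp: fml_at_def)
      next
        case (Suc m)
        have "m < length D0 - 1" "F = D0 ! skip j m"
          using F k0 False ps Suc j by (simp_all add: fml_at_def del_len del_nth split: if_splits)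
        thus ?thesis using False k0 RImpR s0 j Suc skip_lt[OF j(1)] by (auto simp: fml_at_def)
      qed
    qed
  next
    case (RBoxL i)
    then obtain A where i: "i < length G0" "G0 ! i = MBox A"
      and ps: "ps = [(A # G0, D0)]"
      using assms s0 by (auto split: if_splits mform.splits)
    have k0: "k = 0" using assms(2) ps by auto
    have F: "fml_at (ps ! k) b n = Some F" using assms(3) .
    show ?thesis
    proof (cases b)
      case True
      show ?thesis
      proof (cases n)
        case 0
        have "F = A" using F k0 True ps 0 by (simp add: fml_at_def)
        thus ?thesis using True k0 RBoxL s0 i 0 by (auto simp: fml_at_def)
      next
        case (Suc m)
        have "m < length G0" "F = G0 ! m" using F k0 True ps Suc
          by (simp_all add: fml_at_def split: if_splits)
        thus ?thesis using True k0 RBoxL s0 Suc by (auto simp: fml_at_def)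
      qed
    next
      case False
      have "n < length D0" "F = D0 ! n" using F k0 False ps
        by (simp_all add: fml_at_def split: if_splits)
      thus ?thesis using False k0 RBoxL s0 by (auto simp: fml_at_def)
    qed
  next
    case (RBoxR ks j)
    then obtain A where j: "j < length D0" "D0 ! j = MBox A"
      and ks: "\<forall>k\<in>set ks. k < length G0"
      and ps: "ps = [(map (\<lambda>k. G0 ! k) ks, [A])]"
      using assms s0 by (auto split: if_splits mform.splits)
    have k0: "k = 0" using assms(2) ps by auto
    have F: "fml_at (ps ! k) b n = Some F" using assms(3) .
    show ?thesis
    proof (cases b)
      case True
      have "n < length ks" "F = G0 ! (ks ! n)" using F k0 True ps
        by (simp_all add: fml_at_def split: if_splits)
      moreover have "ks ! n < length G0" using ks calculation(1) by auto
      ultimately show ?thesis using True k0 RBoxR s0 by (auto simp: fml_at_def)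
    next
      case False
      have "n = 0" "F = A" using F k0 False ps
        by (simp_all add: fml_at_def split: if_splits)
      thus ?thesis using False k0 RBoxR s0 j by (auto simp: fml_at_def)
    qed
  qed
qed

lemma subtree_snoc:
  "subtree t (\<pi> @ [k]) = (case subtree t \<pi> of None \<Rightarrow> None
     | Some (Node s r ts) \<Rightarrow> if k < length ts then Some (ts ! k) else None)"
proof (induction \<pi> arbitrary: t)
  case Nil thus ?case by (cases t) auto
next
  case (Cons a \<pi>) thus ?case by (cases t) auto
qed

lemma valid_subtree: "g3s_valid T \<Longrightarrow> subtree T \<pi> = Some N \<Longrightarrow> g3s_valid N"
proof (induction \<pi> arbitrary: T)
  case Nil thus ?case by simp
next
  case (Cons k \<pi>)
  obtain s r ts where T: "T = Node s r ts" by (cases T)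
  have "k < length ts" using Cons.prems T by (auto split: if_splits)
  moreover have "\<forall>t\<in>set ts. g3s_valid t" using Cons.prems(1) T by (auto elim: g3s_valid.cases)
  moreover have "subtree (ts ! k) \<pi> = Some N" using Cons.prems T calculation(1) by simp
  ultimately show ?case using Cons.IH by (metis nth_mem)
qed

lemma trace:
  assumes V: "g3s_valid T"
  shows "subtree T \<pi> = Some (Node s r ts) \<Longrightarrow> fml_at s b n = Some F \<Longrightarrow> subf F p = Some (MBox C)
    \<Longrightarrow> \<exists>b' n' G p'. ((\<pi>, b, n, p), ([], b', n', p')) \<in> (corr T)\<^sup>*
        \<and> fml_at (root T) b' n' = Some G \<and> subf G p' = Some (MBox C)
        \<and> (b' \<noteq> par G p') = (b \<noteq> par F p)"
proof (induction \<pi> arbitrary: s r ts b n F p rule: rev_induct)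
  case Nil thus ?case by auto
next
  case (snoc k \<pi>0)
  from snoc.prems(1) obtain s0 r0 ts0 where st0: "subtree T \<pi>0 = Some (Node s0 r0 ts0)"
    and k: "k < length ts0" and tk: "ts0 ! k = Node s r ts"
    by (auto simp: subtree_snoc split: option.splits ptree.splits if_splits)
  have "g3s_valid (Node s0 r0 ts0)" using valid_subtree[OF V st0] .
  hence rp: "rule_prems s0 r0 = Some (map root ts0)" by (auto elim: g3s_valid.cases)
  have "map root ts0 ! k = s" using k tk by simp
  then obtain b' n' pre G where cm: "cmap r0 k b n = Some (b', n', pre)"
    and fG: "fml_at s0 b' n' = Some G" and sG: "subf G pre = Some F" and pl: "(b' \<noteq> par G pre) = b"
    using cmap_ok[OF rp, of k b n F] k snoc.prems(2) by auto
  have sa: "subf G (pre @ p) = Some (MBox C)" "par G (pre @ p) = (par G pre \<noteq> par F p)"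
    using subf_app[OF sG, of p] snoc.prems(3) by auto
  obtain b'' n'' G' p'' where IH: "((\<pi>0, b', n', pre @ p), ([], b'', n'', p'')) \<in> (corr T)\<^sup>*"
    "fml_at (root T) b'' n'' = Some G'" "subf G' p'' = Some (MBox C)"
    "(b'' \<noteq> par G' p'') = (b' \<noteq> par G (pre @ p))"
    using snoc.IH[OF st0 fG sa(1)] by blast
  have bo: "(\<pi>0 @ [k], b, n, p) \<in> box_occs T"
    unfolding box_occs_def using snoc.prems by blast
  have "((\<pi>0 @ [k], b, n, p), (\<pi>0, b', n', pre @ p)) \<in> corr T"
    unfolding corr_def using bo st0 cm by blast
  hence "((\<pi>0 @ [k], b, n, p), ([], b'', n'', p'')) \<in> (corr T)\<^sup>*"
    using IH(1) by (rule converse_rtrancl_into_rtrancl)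
  thus ?case using IH sa pl by blast
qed

section \<open>Soundness of restricted G3s in a non-normal model\<close>

definition Ybox :: mform where "Ybox = MBox (mand P_m (mnot (MBox P_m)))"

fun ev :: "bool \<Rightarrow> mform \<Rightarrow> bool" where
  "ev w MBot = False"
| "ev w (MAt n) = (\<not> w)"
| "ev w (MImp A B) = (ev w A \<longrightarrow> ev w B)"
| "ev w (MBox A) = (if MBox A = Ybox then \<not> w else (\<forall>u. (w \<longrightarrow> u) \<longrightarrow> ev u A))"

definition sat :: "bool \<Rightarrow> sequent \<Rightarrow> bool" where
  "sat w s = ((\<forall>g\<in>set (fst s). ev w g) \<longrightarrow> (\<exists>d\<in>set (snd s). ev w d))"

definition good :: "ptree \<Rightarrow> bool" where
  "good T = (\<forall>\<pi> s ks j ts. subtree T \<pi> = Some (Node s (RBoxR ks j) ts) \<longrightarrow>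
      snd s ! j \<noteq> Ybox \<and> (\<forall>k\<in>set ks. fst s ! k \<noteq> Ybox))"

lemma good_child: "good (Node s r ts) \<Longrightarrow> t \<in> set ts \<Longrightarrow> good t"
proof -
  assume g: "good (Node s r ts)" and t: "t \<in> set ts"
  then obtain k where k: "k < length ts" "ts ! k = t" by (auto simp: in_set_conv_nth)
  show "good t" unfolding good_def
  proof (intro allI impI)
    fix \<pi> s' ks j ts' assume "subtree t \<pi> = Some (Node s' (RBoxR ks j) ts')"
    hence "subtree (Node s r ts) (k # \<pi>) = Some (Node s' (RBoxR ks j) ts')" using k by simp
    thus "snd s' ! j \<noteq> Ybox \<and> (\<forall>k\<in>set ks. fst s' ! k \<noteq> Ybox)"
      using g unfolding good_def by blast
  qed
qed

lemma ev_Y: "ev w Ybox \<Longrightarrow> ev w (mand P_m (mnot (MBox P_m)))"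
  by (cases w) (auto simp: Ybox_def mand_def mnot_def P_m_def)

lemma sound: "g3s_valid T \<Longrightarrow> good T \<Longrightarrow> sat w (root T)"
proof (induction T arbitrary: w rule: g3s_valid.induct)
  case (1 s r ts)
  have gt: "\<forall>t\<in>set ts. good t" using good_child[OF 1(3)] by blast
  have prem: "\<And>x u. x \<in> set (map root ts) \<Longrightarrow> sat u x" using 1(2) gt by auto
  obtain G D where s: "s = (G, D)" by (cases s)
  show ?case
  proof (cases r)
    case (RAx i j) thus ?thesis using 1(1) s
      by (auto simp: sat_def split: if_splits) (metis nth_mem ev.simps(2))
  next
    case (RBotL i) thus ?thesis using 1(1) s
      by (auto simp: sat_def split: if_splits) (metis nth_mem ev.simps(1))
  next
    case (RImpL i)
    then obtain A B where i: "i < length G" "G ! i = MImp A B"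
      and ps: "map root ts = [(del i G, A # D), (B # del i G, D)]"
      using 1(1) s by (auto split: if_splits mform.splits)
    have p1: "sat w (del i G, A # D)" and p2: "sat w (B # del i G, D)" using prem ps by auto
    show ?thesis unfolding sat_def s using p1 p2 i set_del[of i G]
      by (auto simp: sat_def) (metis ev.simps(3) nth_mem subsetD)+
  next
    case (RImpR j)
    then obtain A B where j: "j < length D" "D ! j = MImp A B"
      and ps: "map root ts = [(A # G, B # del j D)]"
      using 1(1) s by (auto split: if_splits mform.splits)
    have p1: "sat w (A # G, B # del j D)" using prem ps by auto
    show ?thesis unfolding sat_def s using p1 j set_del[of j D]
      by (auto simp: sat_def) (metis ev.simps(3) nth_mem subsetD)+
  next
    case (RBoxL i)
    then obtain A where i: "i < length G" "G ! i = MBox A"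
      and ps: "map root ts = [(A # G, D)]"
      using 1(1) s by (auto split: if_splits mform.splits)
    have p1: "sat w (A # G, D)" using prem ps by auto
    have bA: "ev w (MBox A) \<Longrightarrow> ev w A"
      using ev_Y[of w] by (auto simp: Ybox_def split: if_splits)
    have "ev w (MBox A)" if "\<forall>g\<in>set G. ev w g" using i that by (metis nth_mem)
    thus ?thesis using p1 bA s by (auto simp: sat_def)
  next
    case (RBoxR ks j)
    then obtain A where j: "j < length D" "D ! j = MBox A"
      and ks: "\<forall>k\<in>set ks. k < length G \<and> is_box (G ! k)"
      and ps: "map root ts = [(map (\<lambda>k. G ! k) ks, [A])]"
      using 1(1) s by (auto split: if_splits mform.splits)
    have p1: "\<And>u. sat u (map (\<lambda>k. G ! k) ks, [A])" using prem ps by auto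
    have gd: "D ! j \<noteq> Ybox" "\<forall>k\<in>set ks. G ! k \<noteq> Ybox"
      using 1(3) RBoxR s unfolding good_def by (metis fst_conv snd_conv subtree.simps(1))+
    show ?thesis unfolding root.simps sat_def s fst_conv snd_conv
    proof
      assume allG: "\<forall>g\<in>set G. ev w g"
      have "ev w (MBox A)"
      proof -
        have "ev u A" if wu: "w \<longrightarrow> u" for u
        proof -
          have "ev u (G ! k)" if kk: "k \<in> set ks" for k
          proof -
            obtain C where C: "G ! k = MBox C" using ks kk by (cases "G ! k") auto
            have "ev w (G ! k)" using allG ks kk by auto
            thus ?thesis using C gd(2) kk wu by auto
          qed
          thus ?thesis using p1[of u] by (auto simp: sat_def)
        qed
        thus ?thesis using gd(1) j by auto
      qed
      thus "\<exists>d\<in>set D. ev w d" using j by (metis nth_mem)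
    qed
  qed
qed

lemma A_false: "\<not> ev False A_ex"
  by (auto simp: A_ex_def Ybox_def mand_def mnot_def P_m_def)

section \<open>Box positions in A\<close>

fun boxpos :: "mform \<Rightarrow> nat list list" where
  "boxpos MBot = []"
| "boxpos (MAt _) = []"
| "boxpos (MImp A B) = map ((#) 0) (boxpos A) @ map ((#) 1) (boxpos B)"
| "boxpos (MBox A) = [] # map ((#) 0) (boxpos A)"

lemma boxpos_ok: "subf A p = Some (MBox C) \<Longrightarrow> p \<in> set (boxpos A)"
  by (induction A p rule: subf.induct) (auto split: if_splits)

definition q2 :: "nat list" where "q2 = [1,0,0,0,1,0,0]"

lemma root_pos: "subf A_ex p = Some (MBox C) \<Longrightarrow> par A_ex p = False \<Longrightarrow> p = q2 \<and> C = P_m"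
proof -
  assume a: "subf A_ex p = Some (MBox C)" "par A_ex p = False"
  have "p \<in> set (boxpos A_ex)" using boxpos_ok[OF a(1)] .
  thus ?thesis using a by (auto simp: A_ex_def mand_def mnot_def P_m_def q2_def)
qed

lemma fam_sym: "(x, y) \<in> fam_rel T \<Longrightarrow> (y, x) \<in> fam_rel T"
proof -
  have "sym (corr T \<union> (corr T)\<inverse> \<union> Id_on (box_occs T))"
    by (auto simp: sym_def Id_on_def)
  thus "(x, y) \<in> fam_rel T \<Longrightarrow> (y, x) \<in> fam_rel T"
    unfolding fam_rel_def by (meson sym_rtrancl symD)
qed

lemma fam_eq: "(x, r) \<in> fam_rel T \<Longrightarrow> (y, r) \<in> fam_rel T \<Longrightarrow> family T x = family T y"
proof -
  assume a: "(x, r) \<in> fam_rel T" "(y, r) \<in> fam_rel T"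
  have xy: "(x, y) \<in> fam_rel T" using a fam_sym[OF a(2)] unfolding fam_rel_def
    by (meson rtrancl_trans)
  have yx: "(y, x) \<in> fam_rel T" using fam_sym[OF xy] .
  show ?thesis unfolding family_def fam_rel_def using xy yx unfolding fam_rel_def
    by (auto intro: rtrancl_trans)
qed

lemma corr_fam: "(x, r) \<in> (corr T)\<^sup>* \<Longrightarrow> (x, r) \<in> fam_rel T"
  unfolding fam_rel_def by (meson Un_upper1 rtrancl_mono subsetD)

lemma good_T:
  assumes V: "g3s_valid T" and R: "root T = ([], [A_ex])" and ac: "acyclic (prehist T)"
  shows "good T"
  unfolding good_def
proof (intro allI impI)
  fix \<pi> s ks j ts assume st: "subtree T \<pi> = Some (Node s (RBoxR ks j) ts)"
  obtain G D where s: "s = (G, D)" by (cases s)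
  have "g3s_valid (Node s (RBoxR ks j) ts)" using valid_subtree[OF V st] .
  hence rp: "rule_prems s (RBoxR ks j) = Some (map root ts)" by (auto elim: g3s_valid.cases)
  then obtain A where j: "j < length D" "D ! j = MBox A"
      and ks: "\<forall>k\<in>set ks. k < length G \<and> is_box (G ! k)"
      and ps: "map root ts = [(map (\<lambda>k. G ! k) ks, [A])]"
      using s by (auto split: if_splits mform.splits)
  have f1: "fml_at s False j = Some (MBox A)" using j s by (auto simp: fml_at_def)
  obtain b' n' G' p' where t1: "((\<pi>, False, j, []), ([], b', n', p')) \<in> (corr T)\<^sup>*"
    "fml_at (root T) b' n' = Some G'" "subf G' p' = Some (MBox A)" "(b' \<noteq> par G' p') = False"
    using trace[OF V st f1, of "[]" A] by auto
  have "b' = False" "n' = 0" "G' = A_ex" using t1(2) R by (auto simp: fml_at_def split: if_splits)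
  hence p1: "p' = q2" "A = P_m" using root_pos t1 by auto
  have "D ! j \<noteq> Ybox" using j p1 by (simp add: Ybox_def P_m_def mand_def mnot_def)
  moreover have "\<forall>k\<in>set ks. G ! k \<noteq> Ybox"
  proof
    fix k assume kk: "k \<in> set ks"
    show "G ! k \<noteq> Ybox"
    proof
      assume GY: "G ! k = Ybox"
      obtain n where n: "n < length ks" "ks ! n = k" using kk by (auto simp: in_set_conv_nth)
      obtain t0 where ts: "ts = [t0]" "root t0 = (map (\<lambda>k. G ! k) ks, [A])" using ps
        by (cases ts) auto
      obtain s1 r1 ts1 where t0: "t0 = Node s1 r1 ts1" by (cases t0)
      have st0: "subtree T (\<pi> @ [0]) = Some (Node s1 r1 ts1)"
        using st ts t0 by (simp add: subtree_snoc)
      have f2: "fml_at s1 True n = Some Ybox" using ts t0 n GY by (auto simp: fml_at_def)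
      have sY: "subf Ybox [0,0,1,0,0] = Some (MBox P_m)" "par Ybox [0,0,1,0,0] = True"
        by (auto simp: Ybox_def mand_def mnot_def)
      obtain b2 n2 G2 p2 where t2: "((\<pi> @ [0], True, n, [0,0,1,0,0]), ([], b2, n2, p2)) \<in> (corr T)\<^sup>*"
        "fml_at (root T) b2 n2 = Some G2" "subf G2 p2 = Some (MBox P_m)" "(b2 \<noteq> par G2 p2) = False"
        using trace[OF V st0 f2 sY(1)] sY(2) by auto
      have "b2 = False" "n2 = 0" "G2 = A_ex" using t2(2) R by (auto simp: fml_at_def split: if_splits)
      hence "p2 = q2" using root_pos t2 by auto
      have occ: "(\<pi> @ [0], True, n, [0,0,1,0,0]) \<in> box_occs T"
        unfolding box_occs_def using st0 f2 sY(1) by blast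
      have feq: "family T (\<pi> @ [0], True, n, [0,0,1,0,0]) = family T (\<pi>, False, j, [])"
      proof -
        have e1: "((\<pi> @ [0], True, n, [0,0,1,0,0]), ([], False, 0, q2)) \<in> fam_rel T"
          using corr_fam[OF t2(1)] \<open>b2 = False\<close> \<open>n2 = 0\<close> \<open>p2 = q2\<close> by simp
        have e2: "((\<pi>, False, j, []), ([], False, 0, q2)) \<in> fam_rel T"
          using corr_fam[OF t1(1)] \<open>b' = False\<close> \<open>n' = 0\<close> p1 by simp
        show ?thesis using fam_eq[OF e1 e2] .
      qed
      have "(family T (\<pi>, False, j, []), family T (\<pi>, False, j, [])) \<in> prehist T"
        unfolding prehist_def using st occ feq
        by (smt (verit) fst_conv mem_Collect_eq)
      thus False using ac unfolding acyclic_def by blast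
    qed
  qed
  ultimately show "snd s ! j \<noteq> Ybox \<and> (\<forall>k\<in>set ks. fst s ! k \<noteq> Ybox)" using s by simp
qed

theorem mainTheorem11:
  shows "\<exists>A B. s4_thm A \<and> \<not> (\<exists>T. g3s_proof_of T A \<and> prehistoric_cycle_free T)
           \<and> forget B = A \<and> lp_nsr_deriv B \<and> A = A_ex \<and> B = B_ex"
proof -
  have "\<not> (\<exists>T. g3s_proof_of T A_ex \<and> prehistoric_cycle_free T)"
  proof
    assume "\<exists>T. g3s_proof_of T A_ex \<and> prehistoric_cycle_free T"
    then obtain T where V: "g3s_valid T" and R: "root T = ([], [A_ex])" and ac: "acyclic (prehist T)"
      by (auto simp: g3s_proof_of_def prehistoric_cycle_free_def)
    have "sat False (root T)" using sound[OF V good_T[OF V R ac]] .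
    thus False using R A_false by (simp add: sat_def)
  qed
  thus ?thesis using s4_A forget_B lp_nsr by blast
qed

end
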